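(* Let $\mu$ be a finite $P$-invariant measure on $\mathbf X$ and $\tau$ a $\theta$-compatible stopping time such that $\lim_{n\to\infty}\mathbb P_x(\tau\ge n)=0$ for $\mu$-a.e. $x\in\mathbf X$. Then for every non-negative Borel function $f$ on $\mathbf X$, \[\int_{\mathbf X}f\,d\mu=\int_{\mathbf X}SRf\,d\mu.\]
   Context: $\mathbf X$ is a complete separable metric space with its Borel $\sigma$-algebra, $(X_n)$ a Markov chain on $\mathbf X$, $\mathbb P_x$ its law started at $x$, $Pf(x)=\mathbb E_xf(X_1)$; $\mu$ is $P$-invariant if $\int Pf\,d\mu=\int f\,d\mu$ for non-negative Borel $f$. $\theta$ is the shift on $\mathbf X^{\mathbb N}$. A stopping time $\tau$ is $\theta$-compatible if for all $x$, $\mathbb P_x(\tau=0)=0$ and, $\mathbb P_x$-a.s., $\tau\ge2$ implies $\tau\circ\theta=\tau-1$. For non-negative Borel $f$: $Sf(x)=\mathbb E_x[f(X_1)\mathbf 1_{\tau=1}]$, $Rf(x)=\mathbb E_x[(f(X_0)+\dots+f(X_{\tau-1}))\mathbf 1_{\tau<\infty}]$. *)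

theory Defs
  imports "HOL-Probability.Probability"
begin

abbreviation path_space :: "('a::topological_space) stream measure" where
  "path_space \<equiv> stream_space borel"

text \<open>P is the law family of the Markov chain with transition kernel K:
  under P x the chain starts at x, X_1 is distributed as K x, and given X_1 = y
  the shifted path has law P y.  This recursion determines the law uniquely.\<close>
definition markov_law ::
  "('a::topological_space \<Rightarrow> 'a measure) \<Rightarrow> ('a \<Rightarrow> 'a stream measure) \<Rightarrow> bool" where
  "markov_law K P \<longleftrightarrow>
     K \<in> measurable borel (prob_algebra borel) \<and>
     P \<in> measurable borel (prob_algebra path_space) \<and>
     (\<forall>x. P x = bind (K x) (\<lambda>y. distr (P y) path_space (\<lambda>\<omega>. x ## \<omega>)))"

definition trans_op :: "('a \<Rightarrow> 'a stream measure) \<Rightarrow> ('a \<Rightarrow> ennreal) \<Rightarrow> 'a \<Rightarrow> ennreal" where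
  "trans_op P f x = (\<integral>\<^sup>+ \<omega>. f (\<omega> !! 1) \<partial>P x)"

definition invariant_measure ::
  "('a::topological_space \<Rightarrow> 'a stream measure) \<Rightarrow> 'a measure \<Rightarrow> bool" where
  "invariant_measure P \<mu> \<longleftrightarrow>
     (\<forall>f \<in> borel_measurable borel. (\<integral>\<^sup>+ x. trans_op P f x \<partial>\<mu>) = (\<integral>\<^sup>+ x. f x \<partial>\<mu>))"

definition nat_filtration :: "nat \<Rightarrow> ('a::topological_space) stream measure" where
  "nat_filtration n = vimage_algebra (space path_space)
      (\<lambda>\<omega>. restrict (\<lambda>i. \<omega> !! i) {..n}) (PiM {..n} (\<lambda>_. borel))"

definition chain_stopping_time :: "('a::topological_space stream \<Rightarrow> enat) \<Rightarrow> bool" where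
  "chain_stopping_time \<tau> \<longleftrightarrow>
     (\<forall>n::nat. {\<omega> \<in> space path_space. \<tau> \<omega> \<le> enat n} \<in> sets (nat_filtration n))"

definition theta_compatible ::
  "('a::topological_space \<Rightarrow> 'a stream measure) \<Rightarrow> ('a stream \<Rightarrow> enat) \<Rightarrow> bool" where
  "theta_compatible P \<tau> \<longleftrightarrow>
     chain_stopping_time \<tau> \<and>
     (\<forall>x. emeasure (P x) {\<omega> \<in> space path_space. \<tau> \<omega> = 0} = 0) \<and>
     (\<forall>x. AE \<omega> in P x. \<tau> \<omega> \<ge> 2 \<longrightarrow> \<tau> (stl \<omega>) = \<tau> \<omega> - 1)"

definition S_op ::
  "('a \<Rightarrow> 'a stream measure) \<Rightarrow> ('a stream \<Rightarrow> enat) \<Rightarrow> ('a \<Rightarrow> ennreal) \<Rightarrow> 'a \<Rightarrow> ennreal" where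
  "S_op P \<tau> f x = (\<integral>\<^sup>+ \<omega>. f (\<omega> !! 1) * indicator {\<omega>. \<tau> \<omega> = 1} \<omega> \<partial>P x)"

definition R_op ::
  "('a \<Rightarrow> 'a stream measure) \<Rightarrow> ('a stream \<Rightarrow> enat) \<Rightarrow> ('a \<Rightarrow> ennreal) \<Rightarrow> 'a \<Rightarrow> ennreal" where
  "R_op P \<tau> f x = (\<integral>\<^sup>+ \<omega>. (if \<tau> \<omega> < \<infinity> then (\<Sum>i < the_enat (\<tau> \<omega>). f (\<omega> !! i)) else 0) \<partial>P x)"

end

theory Submission
  imports Defs
begin

lemma enat_le1: "(x::enat) \<le> 1 \<longleftrightarrow> x = 0 \<or> x = 1"
  by (cases x) (auto simp: one_enat_def zero_enat_def)
lemma enat_f1: "\<not> (t::enat) \<le> 1 \<Longrightarrow> 2 \<le> t"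
  by (cases t) (auto simp: one_enat_def numeral_eq_enat)
lemma enat_f2: "2 \<le> (t::enat) \<Longrightarrow> enat (Suc m) < t \<longleftrightarrow> enat m < t - 1"
  by (cases t) (auto simp: one_enat_def numeral_eq_enat)
lemma enat_f3: "enat (Suc m) < (t::enat) \<Longrightarrow> \<not> t \<le> 1"
  by (cases t) (auto simp: one_enat_def numeral_eq_enat)
lemma enat_f4: "enat (Suc m) < t \<Longrightarrow> (t - 1) - enat m = t - enat (Suc m)"
  by (cases t) (auto simp: one_enat_def numeral_eq_enat)
lemma enat_f5: "(t - enat m < \<infinity>) = (t < \<infinity>)"
  by (cases t) auto
lemma enat_f6: "(enat 0 < t) = (t \<noteq> 0)"
  by (cases t) (auto simp: zero_enat_def)


locale mc =
  fixes K :: "'a::polish_space \<Rightarrow> 'a measure" and P :: "'a \<Rightarrow> 'a stream measure"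
    and \<tau> :: "'a stream \<Rightarrow> enat"
  assumes law: "markov_law K P" and tau: "theta_compatible P \<tau>"
begin

lemma P_meas: "P \<in> borel \<rightarrow>\<^sub>M prob_algebra path_space" using law unfolding markov_law_def by blast
lemma K_meas: "K \<in> borel \<rightarrow>\<^sub>M prob_algebra borel" using law unfolding markov_law_def by blast
lemma P_eq: "P x = bind (K x) (\<lambda>y. distr (P y) path_space (\<lambda>\<omega>. x ## \<omega>))"
  using law unfolding markov_law_def by blast

lemma space_path[simp]: "space path_space = UNIV"
  by (simp add: space_stream_space)

lemma P_prob: "prob_space (P x)" and sets_P[measurable_cong, simp]: "sets (P x) = sets path_space"
  using measurable_space[OF P_meas, of x] by (auto simp: space_prob_algebra)
lemma space_P[simp]: "space (P x) = UNIV"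
  using sets_eq_imp_space_eq[OF sets_P[of x]] by simp
lemma K_prob: "prob_space (K x)" and sets_K[measurable_cong, simp]: "sets (K x) = sets borel"
  using measurable_space[OF K_meas, of x] by (auto simp: space_prob_algebra)
lemma space_K[simp]: "space (K x) = UNIV"
  using sets_eq_imp_space_eq[OF sets_K[of x]] by simp

lemma distr_meas: "(\<lambda>y. distr (P y) path_space (\<lambda>\<omega>. x ## \<omega>)) \<in> K x \<rightarrow>\<^sub>M subprob_algebra path_space"
proof -
  have "(\<lambda>y. distr (P y) path_space (\<lambda>\<omega>. x ## \<omega>)) \<in> borel \<rightarrow>\<^sub>M prob_algebra path_space"
    by (rule measurable_compose[OF P_meas measurable_distr_prob_space]) measurable
  then show ?thesis by (simp add: measurable_prob_algebraD cong: measurable_cong_sets)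
qed

lemma one_step:
  assumes G: "G \<in> borel_measurable path_space"
  shows "(\<integral>\<^sup>+\<omega>. G \<omega> \<partial>P x) = (\<integral>\<^sup>+y. (\<integral>\<^sup>+\<omega>. G (x ## \<omega>) \<partial>P y) \<partial>K x)"
proof -
  have "(\<integral>\<^sup>+\<omega>. G \<omega> \<partial>P x) = (\<integral>\<^sup>+y. (\<integral>\<^sup>+\<omega>. G \<omega> \<partial>distr (P y) path_space (\<lambda>\<omega>. x ## \<omega>)) \<partial>K x)"
    by (subst P_eq) (rule nn_integral_bind[OF G distr_meas])
  also have "\<dots> = (\<integral>\<^sup>+y. (\<integral>\<^sup>+\<omega>. G (x ## \<omega>) \<partial>P y) \<partial>K x)"
    by (intro nn_integral_cong nn_integral_distr) (auto simp: G cong: measurable_cong_sets)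
  finally show ?thesis .
qed

lemma emeasure_one_step:
  assumes A: "A \<in> sets path_space"
  shows "emeasure (P x) A = (\<integral>\<^sup>+y. emeasure (P y) ((\<lambda>\<omega>. x ## \<omega>) -` A) \<partial>K x)"
proof -
  have "emeasure (P x) A = (\<integral>\<^sup>+\<omega>. indicator A \<omega> \<partial>P x)" using A by simp
  also have "\<dots> = (\<integral>\<^sup>+y. (\<integral>\<^sup>+\<omega>. indicator A (x ## \<omega>) \<partial>P y) \<partial>K x)"
    using A by (intro one_step) simp
  also have "\<dots> = (\<integral>\<^sup>+y. emeasure (P y) ((\<lambda>\<omega>. x ## \<omega>) -` A) \<partial>K x)"
  proof (intro nn_integral_cong)
    fix y
    have m: "(\<lambda>\<omega>. x ## \<omega>) -` A \<in> sets path_space"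
      using measurable_sets[of "\<lambda>\<omega>. x ## \<omega>" path_space path_space A] A by simp
    have "(\<integral>\<^sup>+\<omega>. indicator A (x ## \<omega>) \<partial>P y) = (\<integral>\<^sup>+\<omega>. indicator ((\<lambda>\<omega>. x ## \<omega>) -` A) \<omega> \<partial>P y)"
      by (simp add: indicator_def)
    then show "(\<integral>\<^sup>+\<omega>. indicator A (x ## \<omega>) \<partial>P y) = emeasure (P y) ((\<lambda>\<omega>. x ## \<omega>) -` A)"
      using m by simp
  qed
  finally show ?thesis .
qed

lemma AE_shd: "AE \<omega> in P y. shd \<omega> = y"
proof -
  have A: "{\<omega>. shd \<omega> \<noteq> y} \<in> sets path_space"
  proof -
    have "{\<omega>. shd \<omega> \<noteq> y} = shd -` (-{y}) \<inter> space path_space" by auto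
    also have "\<dots> \<in> sets path_space"
      by (rule measurable_sets[OF measurable_shd]) (simp add: open_Compl)
    finally show ?thesis .
  qed
  have "emeasure (P y) {\<omega>. shd \<omega> \<noteq> y} = (\<integral>\<^sup>+z. emeasure (P z) ((\<lambda>\<omega>. y ## \<omega>) -` {\<omega>. shd \<omega> \<noteq> y}) \<partial>K y)"
    by (rule emeasure_one_step[OF A])
  also have "\<dots> = 0" by simp
  finally have "{\<omega>. shd \<omega> \<noteq> y} \<in> null_sets (P y)" using A by auto
  then show ?thesis by (rule AE_I') auto
qed

lemma F_sets: "{\<omega>. \<tau> \<omega> \<le> enat n} \<in> sets (nat_filtration n)"
  using tau unfolding theta_compatible_def chain_stopping_time_def by simp

lemma restr_meas: "(\<lambda>\<omega>::'a stream. restrict (\<lambda>i. \<omega> !! i) {..n}) \<in> path_space \<rightarrow>\<^sub>M PiM {..n} (\<lambda>_. borel)"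
  by (rule measurable_restrict) simp

lemma F_obtain:
  obtains A where "A \<in> sets (PiM {..n} (\<lambda>_. borel))"
    "{\<omega>. \<tau> \<omega> \<le> enat n} = (\<lambda>\<omega>. restrict (\<lambda>i. \<omega> !! i) {..n}) -` A"
proof -
  have "{\<omega>. \<tau> \<omega> \<le> enat n} \<in> sets (nat_filtration n)" by (rule F_sets)
  also have "sets (nat_filtration n) = {(\<lambda>\<omega>. restrict (\<lambda>i. \<omega> !! i) {..n}) -` A \<inter> space path_space | A. A \<in> sets (PiM {..n} (\<lambda>_. borel))}"
    unfolding nat_filtration_def by (rule sets_vimage_algebra2) (auto simp: space_PiM)
  finally show ?thesis using that by auto
qed

lemma tau_le_sets[measurable]: "{\<omega>. \<tau> \<omega> \<le> enat n} \<in> sets path_space"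
proof -
  obtain A where A: "A \<in> sets (PiM {..n} (\<lambda>_. borel))"
    "{\<omega>. \<tau> \<omega> \<le> enat n} = (\<lambda>\<omega>. restrict (\<lambda>i. \<omega> !! i) {..n}) -` A" by (rule F_obtain)
  have "(\<lambda>\<omega>. restrict (\<lambda>i. \<omega> !! i) {..n}) -` A \<inter> space path_space \<in> sets path_space"
    by (rule measurable_sets[OF restr_meas A(1)])
  then show ?thesis using A(2) by simp
qed

definition beta :: "'a \<Rightarrow> 'a \<Rightarrow> bool" where "beta x y \<longleftrightarrow> \<tau> (x ## sconst y) \<le> 1"

lemma beta_aux: "shd \<omega>1 = shd \<omega>2 \<Longrightarrow> (\<tau> (x ## \<omega>1) \<le> 1) = (\<tau> (x ## \<omega>2) \<le> 1)"
proof -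
  obtain A where A: "{\<omega>. \<tau> \<omega> \<le> enat 1} = (\<lambda>\<omega>. restrict (\<lambda>i. \<omega> !! i) {..1}) -` A" by (rule F_obtain)
  assume "shd \<omega>1 = shd \<omega>2"
  then have "restrict (\<lambda>i. (x##\<omega>1) !! i) {..1::nat} = restrict (\<lambda>i. (x##\<omega>2) !! i) {..1}"
    by (auto simp: restrict_def fun_eq_iff le_Suc_eq)
  then show ?thesis using A[THEN eqset_imp_iff, of "x##\<omega>1"] A[THEN eqset_imp_iff, of "x##\<omega>2"]
    by (simp add: one_enat_def)
qed

lemma beta_eq: "(\<tau> (x ## \<omega>) \<le> 1) = beta x (shd \<omega>)"
  unfolding beta_def by (rule beta_aux) simp

lemma tau_meas[measurable]: "\<tau> \<in> path_space \<rightarrow>\<^sub>M count_space UNIV"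
proof (rule iffD2[OF measurable_count_space_eq_countable], simp, intro conjI ballI)
  show "\<tau> \<in> space path_space \<rightarrow> UNIV" by simp
  fix a :: enat
  show "\<tau> -` {a} \<inter> space path_space \<in> sets path_space"
  proof (cases a)
    case (enat n)
    have "\<tau> -` {a} \<inter> space path_space = {\<omega>. \<tau> \<omega> \<le> enat n} - (\<Union>m\<in>{..<n}. {\<omega>. \<tau> \<omega> \<le> enat m})"
    proof (intro set_eqI iffI)
      fix \<omega> assume "\<omega> \<in> \<tau> -` {a} \<inter> space path_space" then show "\<omega> \<in> {\<omega>. \<tau> \<omega> \<le> enat n} - (\<Union>m\<in>{..<n}. {\<omega>. \<tau> \<omega> \<le> enat m})"
        using enat by auto
    next
      fix \<omega> assume "\<omega> \<in> {\<omega>. \<tau> \<omega> \<le> enat n} - (\<Union>m\<in>{..<n}. {\<omega>. \<tau> \<omega> \<le> enat m})"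
      then have h1: "\<tau> \<omega> \<le> enat n" and h2: "\<And>m. m < n \<Longrightarrow> \<not> \<tau> \<omega> \<le> enat m" by auto
      obtain k where k: "\<tau> \<omega> = enat k" using h1 by (cases "\<tau> \<omega>") auto
      have "k \<le> n" using h1 k by simp
      moreover have "\<not> k < n" using h2[of k] k by auto
      ultimately show "\<omega> \<in> \<tau> -` {a} \<inter> space path_space" using enat k by simp
    qed
    then show ?thesis by simp
  next
    case infinity
    have "\<tau> -` {a} \<inter> space path_space = UNIV - (\<Union>m. {\<omega>. \<tau> \<omega> \<le> enat m})"
    proof (intro set_eqI)
      fix \<omega> show "\<omega> \<in> \<tau> -` {a} \<inter> space path_space \<longleftrightarrow> \<omega> \<in> UNIV - (\<Union>m. {\<omega>. \<tau> \<omega> \<le> enat m})"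
        using infinity by (cases "\<tau> \<omega>") auto
    qed
    moreover have "(\<Union>m. {\<omega>. \<tau> \<omega> \<le> enat m}) \<in> sets path_space" by measurable
    ultimately show ?thesis using sets.compl_sets[of "\<Union>m. {\<omega>. \<tau> \<omega> \<le> enat m}" path_space] by simp
  qed
qed

lemma tau_pred[measurable]: "Measurable.pred path_space (\<lambda>\<omega>. Q (\<tau> \<omega>))"
  by (rule measurable_compose[OF tau_meas measurable_count_space])

lemma tau_set[measurable]: "{\<omega>. Q (\<tau> \<omega>)} \<in> sets path_space"
  using tau_pred[of Q] unfolding pred_def by simp

lemma tau2_meas: "(\<lambda>\<omega>. (\<tau> \<omega>, \<tau> (sdrop m \<omega>))) \<in> path_space \<rightarrow>\<^sub>M count_space UNIV"
proof -
  have "(\<lambda>\<omega>. (\<tau> \<omega>, \<tau> (sdrop m \<omega>))) \<in> path_space \<rightarrow>\<^sub>M count_space UNIV \<Otimes>\<^sub>M count_space UNIV"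
    by measurable
  then show ?thesis by (simp add: pair_measure_countable)
qed

lemma tau2_pred[measurable]: "Measurable.pred path_space (\<lambda>\<omega>. Q (\<tau> \<omega>) (\<tau> (sdrop m \<omega>)))"
  using measurable_compose[OF tau2_meas measurable_count_space, of "\<lambda>(a,b). Q a b"] by simp

lemma AE_tau_ne0: "AE \<omega> in P x. \<tau> \<omega> \<noteq> 0"
proof -
  have "emeasure (P x) {\<omega>. \<tau> \<omega> = 0} = 0"
    using tau unfolding theta_compatible_def by simp
  moreover have "{\<omega>. \<tau> \<omega> = 0} \<in> sets path_space" using tau_set[of "\<lambda>t. t = 0"] by simp
  ultimately have "{\<omega>. \<tau> \<omega> = 0} \<in> null_sets (P x)" by auto
  then show ?thesis by (rule AE_I') auto
qed

lemma AE_compat: "AE \<omega> in P x. 2 \<le> \<tau> \<omega> \<longrightarrow> \<tau> (stl \<omega>) = \<tau> \<omega> - 1"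
  using tau unfolding theta_compatible_def by blast

lemma Pint_meas: "G \<in> borel_measurable path_space \<Longrightarrow> (\<lambda>y. \<integral>\<^sup>+\<omega>. G \<omega> \<partial>P y) \<in> borel_measurable borel"
  by (rule measurable_compose[OF measurable_prob_algebraD[OF P_meas] nn_integral_measurable_subprob_algebra])

lemma const_AE: "(\<And>\<omega>. shd \<omega> = y \<Longrightarrow> F \<omega> = c) \<Longrightarrow> (\<integral>\<^sup>+\<omega>. F \<omega> \<partial>P y) = c"
proof -
  assume h: "\<And>\<omega>. shd \<omega> = y \<Longrightarrow> F \<omega> = c"
  have "(\<integral>\<^sup>+\<omega>. F \<omega> \<partial>P y) = (\<integral>\<^sup>+\<omega>. c \<partial>P y)"
    using AE_shd[of y] by (intro nn_integral_cong_AE) (auto simp: h)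
  also have "\<dots> = c" using prob_space.emeasure_space_1[OF P_prob] by simp
  finally show ?thesis .
qed

definition Nop :: "('a \<Rightarrow> ennreal) \<Rightarrow> 'a \<Rightarrow> ennreal" where
  "Nop g x = (\<integral>\<^sup>+\<omega>. g (\<omega> !! 1) * indicator {\<omega>. \<not> \<tau> \<omega> \<le> 1} \<omega> \<partial>P x)"

lemma tau_ind[measurable]: "indicator {\<omega>. Q (\<tau> \<omega>)} \<in> borel_measurable path_space"
  using tau_set[of Q] by (rule borel_measurable_indicator)

lemma Nop_meas[measurable]: assumes [measurable]: "g \<in> borel_measurable borel" shows "Nop g \<in> borel_measurable borel"
  unfolding Nop_def by (rule Pint_meas) measurable

lemma Nop_iter_meas[measurable]: "g \<in> borel_measurable borel \<Longrightarrow> (Nop ^^ m) g \<in> borel_measurable borel"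
  by (induction m) (auto intro: Nop_meas)

lemma S_meas[measurable]: assumes [measurable]: "g \<in> borel_measurable borel" shows "S_op P \<tau> g \<in> borel_measurable borel"
  unfolding S_op_def by (rule Pint_meas) measurable

lemma trans_meas: assumes [measurable]: "g \<in> borel_measurable borel" shows "trans_op P g \<in> borel_measurable borel"
  unfolding trans_op_def by (rule Pint_meas) measurable

lemma SN: assumes g[measurable]: "g \<in> borel_measurable borel"
  shows "trans_op P g x = S_op P \<tau> g x + Nop g x"
proof -
  have "trans_op P g x = (\<integral>\<^sup>+\<omega>. g (\<omega> !! 1) * indicator {\<omega>. \<tau> \<omega> = 1} \<omega> + g (\<omega> !! 1) * indicator {\<omega>. \<not> \<tau> \<omega> \<le> 1} \<omega> \<partial>P x)"
    unfolding trans_op_def using AE_tau_ne0[of x]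
    by (intro nn_integral_cong_AE) (auto simp: indicator_def enat_le1)
  also have "\<dots> = S_op P \<tau> g x + Nop g x"
    unfolding S_op_def Nop_def by (rule nn_integral_add) measurable
  finally show ?thesis .
qed

lemma Nop_K: assumes psi[measurable]: "\<psi> \<in> borel_measurable borel"
  shows "Nop \<psi> x = (\<integral>\<^sup>+y. \<psi> y * indicator {y. \<not> beta x y} y \<partial>K x)"
proof -
  have "Nop \<psi> x = (\<integral>\<^sup>+y. (\<integral>\<^sup>+\<omega>. \<psi> ((x ## \<omega>) !! 1) * indicator {\<omega>. \<not> \<tau> \<omega> \<le> 1} (x ## \<omega>) \<partial>P y) \<partial>K x)"
    unfolding Nop_def by (rule one_step) measurable
  also have "\<dots> = (\<integral>\<^sup>+y. \<psi> y * indicator {y. \<not> beta x y} y \<partial>K x)"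
    by (intro nn_integral_cong const_AE) (auto simp: indicator_def beta_eq)
  finally show ?thesis .
qed

lemma AE_stl: assumes AE: "\<And>y. AE \<omega> in P y. Q \<omega>" and Qm[measurable]: "Measurable.pred path_space Q"
  shows "AE \<omega> in P x. Q (stl \<omega>)"
proof -
  have "Measurable.pred path_space (\<lambda>\<omega>. \<not> Q (stl \<omega>))" by measurable
  then have S: "{\<omega>. \<not> Q (stl \<omega>)} \<in> sets path_space" by (simp add: pred_def)
  have "Measurable.pred path_space (\<lambda>\<omega>. \<not> Q \<omega>)" by measurable
  then have S2: "{\<omega>. \<not> Q \<omega>} \<in> sets path_space" by (simp add: pred_def)
  have "emeasure (P x) {\<omega>. \<not> Q (stl \<omega>)} = (\<integral>\<^sup>+y. emeasure (P y) ((\<lambda>\<omega>. x ## \<omega>) -` {\<omega>. \<not> Q (stl \<omega>)}) \<partial>K x)"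
    by (rule emeasure_one_step[OF S])
  also have "\<dots> = (\<integral>\<^sup>+y. 0 \<partial>K x)"
  proof (intro nn_integral_cong)
    fix y
    have "(\<lambda>\<omega>. x ## \<omega>) -` {\<omega>. \<not> Q (stl \<omega>)} = {\<omega>. \<not> Q \<omega>}" by auto
    moreover have "emeasure (P y) {\<omega>. \<not> Q \<omega>} = 0"
      using AE[of y] S2 by (subst AE_iff_measurable[symmetric]) auto
    ultimately show "emeasure (P y) ((\<lambda>\<omega>. x ## \<omega>) -` {\<omega>. \<not> Q (stl \<omega>)}) = 0" by simp
  qed
  finally have "{\<omega>. \<not> Q (stl \<omega>)} \<in> null_sets (P x)" using S by auto
  then show ?thesis by (rule AE_I') auto
qed

lemma shift: "AE \<omega> in P x. enat m < \<tau> \<omega> \<longrightarrow> \<tau> (sdrop m \<omega>) = \<tau> \<omega> - enat m"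
proof (induction m arbitrary: x)
  case 0 then show ?case by (simp add: zero_enat_def[symmetric])
next
  case (Suc m)
  have "AE \<omega> in P x. (enat m < \<tau> (stl \<omega>) \<longrightarrow> \<tau> (sdrop m (stl \<omega>)) = \<tau> (stl \<omega>) - enat m)"
    by (rule AE_stl[OF Suc.IH]) measurable
  then show ?case using AE_compat[of x]
  proof eventually_elim
    case (elim \<omega>)
    show ?case
    proof
      assume a: "enat (Suc m) < \<tau> \<omega>"
      then have t2: "2 \<le> \<tau> \<omega>" using enat_f1 enat_f3 by blast
      then have st: "\<tau> (stl \<omega>) = \<tau> \<omega> - 1" using elim by blast
      have "enat m < \<tau> (stl \<omega>)" using a t2 st enat_f2 by simp
      then have "\<tau> (sdrop m (stl \<omega>)) = (\<tau> \<omega> - 1) - enat m" using elim st by simp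
      then show "\<tau> (sdrop (Suc m) \<omega>) = \<tau> \<omega> - enat (Suc m)" using enat_f4[OF a] by simp
    qed
  qed
qed

lemma N_iter: assumes G[measurable]: "G \<in> borel_measurable path_space"
  shows "(Nop ^^ m) (\<lambda>y. \<integral>\<^sup>+\<omega>. G \<omega> \<partial>P y) x = (\<integral>\<^sup>+\<omega>. indicator {\<omega>. enat m < \<tau> \<omega>} \<omega> * G (sdrop m \<omega>) \<partial>P x)"
proof (induction m arbitrary: x)
  case 0
  show ?case using AE_tau_ne0[of x]
    by (simp, intro nn_integral_cong_AE) (auto simp: indicator_def enat_f6)
next
  case (Suc m)
  define \<psi> where "\<psi> = (\<lambda>y. \<integral>\<^sup>+\<omega>. indicator {\<omega>. enat m < \<tau> \<omega>} \<omega> * G (sdrop m \<omega>) \<partial>P y)"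
  have psim[measurable]: "\<psi> \<in> borel_measurable borel" unfolding \<psi>_def by (rule Pint_meas) measurable
  have eq: "(Nop ^^ m) (\<lambda>y. \<integral>\<^sup>+\<omega>. G \<omega> \<partial>P y) = \<psi>" unfolding \<psi>_def using Suc.IH by auto
  have "(Nop ^^ Suc m) (\<lambda>y. \<integral>\<^sup>+\<omega>. G \<omega> \<partial>P y) x = Nop \<psi> x" using eq by simp
  also have "\<dots> = (\<integral>\<^sup>+y. \<psi> y * indicator {y. \<not> beta x y} y \<partial>K x)" by (rule Nop_K) simp
  also have "\<dots> = (\<integral>\<^sup>+y. (\<integral>\<^sup>+\<omega>. indicator {\<omega>. \<not> \<tau> \<omega> \<le> 1} (x ## \<omega>) * (indicator {\<omega>. enat m < \<tau> \<omega>} \<omega> * G (sdrop m \<omega>)) \<partial>P y) \<partial>K x)"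
  proof (intro nn_integral_cong)
    fix y
    have "(\<integral>\<^sup>+\<omega>. indicator {\<omega>. \<not> \<tau> \<omega> \<le> 1} (x ## \<omega>) * (indicator {\<omega>. enat m < \<tau> \<omega>} \<omega> * G (sdrop m \<omega>)) \<partial>P y)
       = (\<integral>\<^sup>+\<omega>. indicator {y. \<not> beta x y} y * (indicator {\<omega>. enat m < \<tau> \<omega>} \<omega> * G (sdrop m \<omega>)) \<partial>P y)"
      using AE_shd[of y] by (intro nn_integral_cong_AE) (auto simp: indicator_def beta_eq)
    also have "\<dots> = indicator {y. \<not> beta x y} y * \<psi> y"
      unfolding \<psi>_def by (rule nn_integral_cmult) measurable
    finally show "\<psi> y * indicator {y. \<not> beta x y} y = (\<integral>\<^sup>+\<omega>. indicator {\<omega>. \<not> \<tau> \<omega> \<le> 1} (x ## \<omega>) * (indicator {\<omega>. enat m < \<tau> \<omega>} \<omega> * G (sdrop m \<omega>)) \<partial>P y)"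
      by (simp add: mult.commute)
  qed
  also have "\<dots> = (\<integral>\<^sup>+\<omega>. indicator {\<omega>. \<not> \<tau> \<omega> \<le> 1} \<omega> * (indicator {\<omega>. enat m < \<tau> \<omega>} (stl \<omega>) * G (sdrop m (stl \<omega>))) \<partial>P x)"
    by (rule sym, subst one_step) (simp_all add: G)
  also have "\<dots> = (\<integral>\<^sup>+\<omega>. indicator {\<omega>. enat (Suc m) < \<tau> \<omega>} \<omega> * G (sdrop (Suc m) \<omega>) \<partial>P x)"
    using AE_compat[of x]
  proof (intro nn_integral_cong_AE, eventually_elim)
    case (elim \<omega>)
    have "(enat (Suc m) < \<tau> \<omega>) = (\<not> \<tau> \<omega> \<le> 1 \<and> enat m < \<tau> (stl \<omega>))"
    proof (cases "\<tau> \<omega> \<le> 1")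
      case True then show ?thesis using enat_f3 by blast
    next
      case False
      then have "2 \<le> \<tau> \<omega>" by (rule enat_f1)
      then show ?thesis using elim enat_f2 False by auto
    qed
    then show ?case by (auto simp: indicator_def)
  qed
  finally show ?case .
qed

lemma Nop_mono: "(\<And>y. f y \<le> g y) \<Longrightarrow> Nop f x \<le> Nop g x"
  unfolding Nop_def by (intro nn_integral_mono mult_right_mono) auto

lemma Nop_iter_mono: "(\<And>y. f y \<le> g y) \<Longrightarrow> (Nop ^^ m) f x \<le> (Nop ^^ m) g x"
  by (induction m arbitrary: x) (auto intro: Nop_mono)

lemma S_mono: "(\<And>y. f y \<le> g y) \<Longrightarrow> S_op P \<tau> f x \<le> S_op P \<tau> g x"
  unfolding S_op_def by (intro nn_integral_mono mult_right_mono) auto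

lemma int_SUP: assumes inc: "\<And>k y. F k y \<le> F (Suc k) y" and Fm[measurable]: "\<And>k. F k \<in> borel_measurable borel"
  and A[measurable]: "A \<in> sets path_space"
  shows "(\<integral>\<^sup>+\<omega>. (SUP k. F k (\<omega> !! 1)) * indicator A \<omega> \<partial>P x) = (SUP k. \<integral>\<^sup>+\<omega>. F k (\<omega> !! 1) * indicator A \<omega> \<partial>P x)"
proof -
  have "(\<integral>\<^sup>+\<omega>. (SUP k. F k (\<omega> !! 1)) * indicator A \<omega> \<partial>P x) = (\<integral>\<^sup>+\<omega>. (SUP k. F k (\<omega> !! 1) * indicator A \<omega>) \<partial>P x)"
    by (simp add: SUP_mult_right_ennreal)
  also have "\<dots> = (SUP k. \<integral>\<^sup>+\<omega>. F k (\<omega> !! 1) * indicator A \<omega> \<partial>P x)"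
  proof (rule nn_integral_monotone_convergence_SUP)
    show "incseq (\<lambda>k \<omega>. F k (\<omega> !! 1) * indicator A \<omega>)"
      by (intro incseq_SucI le_funI mult_right_mono inc) auto
  qed measurable
  finally show ?thesis .
qed

lemma Nop_SUP: assumes inc: "\<And>k y. G k y \<le> G (Suc k) y" and Gm[measurable]: "\<And>k. G k \<in> borel_measurable borel"
  shows "Nop (\<lambda>y. SUP k. G k y) x = (SUP k. Nop (G k) x)"
  unfolding Nop_def by (rule int_SUP[where F=G]) (auto intro: inc)

lemma Nop_iter_SUP: assumes inc: "\<And>k y. F k y \<le> F (Suc k) y" and Fm[measurable]: "\<And>k. F k \<in> borel_measurable borel"
  shows "(Nop ^^ m) (\<lambda>y. SUP k. F k y) x = (SUP k. (Nop ^^ m) (F k) x)"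
proof (induction m arbitrary: x)
  case 0 then show ?case by simp
next
  case (Suc m)
  have eq: "(Nop ^^ m) (\<lambda>y. SUP k. F k y) = (\<lambda>y. SUP k. (Nop ^^ m) (F k) y)" using Suc.IH by auto
  have "(Nop ^^ Suc m) (\<lambda>y. SUP k. F k y) x = Nop (\<lambda>y. SUP k. (Nop ^^ m) (F k) y) x" using eq by simp
  also have "\<dots> = (SUP k. Nop ((Nop ^^ m) (F k)) x)"
    by (rule Nop_SUP) (auto intro: Nop_iter_mono inc)
  finally show ?case by simp
qed

lemma S_SUP: assumes inc: "\<And>k y. F k y \<le> F (Suc k) y" and Fm[measurable]: "\<And>k. F k \<in> borel_measurable borel"
  shows "S_op P \<tau> (\<lambda>y. SUP k. F k y) x = (SUP k. S_op P \<tau> (F k) x)"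
  unfolding S_op_def by (rule int_SUP[where F=F]) (auto intro: inc)

lemma Nop_bound: assumes g[measurable]: "g \<in> borel_measurable borel" and c: "\<And>y. g y \<le> c"
  shows "(Nop ^^ n) g x \<le> c * emeasure (P x) {\<omega>. enat n \<le> \<tau> \<omega>}"
proof -
  have "g = (\<lambda>y. \<integral>\<^sup>+\<omega>. g (shd \<omega>) \<partial>P y)" by (rule ext, rule const_AE[symmetric]) simp
  then have "(Nop ^^ n) g x = (Nop ^^ n) (\<lambda>y. \<integral>\<^sup>+\<omega>. g (shd \<omega>) \<partial>P y) x" by simp
  also have "\<dots> = (\<integral>\<^sup>+\<omega>. indicator {\<omega>. enat n < \<tau> \<omega>} \<omega> * g (shd (sdrop n \<omega>)) \<partial>P x)"
    by (rule N_iter) measurable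
  also have "\<dots> \<le> (\<integral>\<^sup>+\<omega>. c * indicator {\<omega>. enat n \<le> \<tau> \<omega>} \<omega> \<partial>P x)"
    by (intro nn_integral_mono) (auto simp: indicator_def c)
  also have "\<dots> = c * emeasure (P x) {\<omega>. enat n \<le> \<tau> \<omega>}"
    by (rule nn_integral_cmult_indicator) measurable
  finally show ?thesis .
qed

end

locale mcmu = mc K P \<tau> for K :: "'a::polish_space \<Rightarrow> 'a measure" and P \<tau> +
  fixes \<mu> :: "'a measure"
  assumes mu_sets: "sets \<mu> = sets borel"
    and mu_finite: "finite_measure \<mu>"
    and mu_inv: "invariant_measure P \<mu>"
    and tau_fin: "AE x in \<mu>. (\<lambda>n. measure (P x) {\<omega> \<in> space path_space. \<tau> \<omega> \<ge> enat n}) \<longlonglongrightarrow> 0"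
begin

lemma mu_meas: "f \<in> borel_measurable borel \<Longrightarrow> f \<in> borel_measurable \<mu>"
  using measurable_cong_sets[OF mu_sets refl] by blast

lemma inv: "f \<in> borel_measurable borel \<Longrightarrow> (\<integral>\<^sup>+x. trans_op P f x \<partial>\<mu>) = (\<integral>\<^sup>+x. f x \<partial>\<mu>)"
  using mu_inv unfolding invariant_measure_def by blast

lemma dec: assumes g[measurable]: "g \<in> borel_measurable borel"
  shows "(\<integral>\<^sup>+x. g x \<partial>\<mu>) = (\<Sum>m<n. \<integral>\<^sup>+x. S_op P \<tau> ((Nop ^^ m) g) x \<partial>\<mu>) + (\<integral>\<^sup>+x. (Nop ^^ n) g x \<partial>\<mu>)"
proof (induction n)
  case 0 then show ?case by simp
next
  case (Suc n)
  have "(\<integral>\<^sup>+x. (Nop ^^ n) g x \<partial>\<mu>) = (\<integral>\<^sup>+x. trans_op P ((Nop ^^ n) g) x \<partial>\<mu>)"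
    by (rule inv[symmetric]) measurable
  also have "\<dots> = (\<integral>\<^sup>+x. S_op P \<tau> ((Nop ^^ n) g) x + (Nop ^^ Suc n) g x \<partial>\<mu>)"
    by (intro nn_integral_cong) (simp add: SN)
  also have "\<dots> = (\<integral>\<^sup>+x. S_op P \<tau> ((Nop ^^ n) g) x \<partial>\<mu>) + (\<integral>\<^sup>+x. (Nop ^^ Suc n) g x \<partial>\<mu>)"
    by (rule nn_integral_add) (intro mu_meas, measurable)+
  finally show ?case using Suc.IH by (simp add: add.assoc)
qed

definition u :: "nat \<Rightarrow> 'a \<Rightarrow> ennreal" where "u n x = emeasure (P x) {\<omega>. enat n \<le> \<tau> \<omega>}"

lemma u_meas[measurable]: "u n \<in> borel_measurable borel"
proof -
  have "u n = (\<lambda>x. \<integral>\<^sup>+\<omega>. indicator {\<omega>. enat n \<le> \<tau> \<omega>} \<omega> \<partial>P x)"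
    unfolding u_def by (intro ext nn_integral_indicator[symmetric]) measurable
  also have "\<dots> \<in> borel_measurable borel" by (rule Pint_meas) measurable
  finally show ?thesis .
qed


lemma u_lim: "(\<lambda>n. \<integral>\<^sup>+x. u n x \<partial>\<mu>) \<longlonglongrightarrow> 0"
proof -
  have dec: "decseq (\<lambda>n. u n x)" for x
    unfolding u_def by (intro decseq_SucI emeasure_mono) (auto simp: Suc_ile_eq)
  have decf: "decseq u" by (intro decseq_SucI le_funI) (use dec in \<open>auto simp: decseq_Suc_iff\<close>)
  have fin: "(\<integral>\<^sup>+x. u n x \<partial>\<mu>) < top" for n
  proof -
    have "(\<integral>\<^sup>+x. u n x \<partial>\<mu>) \<le> (\<integral>\<^sup>+x. 1 \<partial>\<mu>)"
      unfolding u_def by (intro nn_integral_mono prob_space.measure_le_1[OF P_prob]) 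
    also have "\<dots> < top" using finite_measure.emeasure_finite[OF mu_finite] by (simp add: top.not_eq_extremum)
    finally show ?thesis .
  qed
  have ae: "AE x in \<mu>. (INF n. u n x) = 0"
    using tau_fin
  proof eventually_elim
    case (elim x)
    have "(\<lambda>n. u n x) \<longlonglongrightarrow> ennreal 0"
    proof -
      have "(\<lambda>n. ennreal (measure (P x) {\<omega>. enat n \<le> \<tau> \<omega>})) \<longlonglongrightarrow> ennreal 0"
        using elim by (intro tendsto_ennrealI) simp
      moreover have "u n x = ennreal (measure (P x) {\<omega>. enat n \<le> \<tau> \<omega>})" for n
        unfolding u_def using finite_measure.emeasure_eq_measure[OF prob_space.finite_measure[OF P_prob]] by blast
      ultimately show ?thesis by simp
    qed
    moreover have "(\<lambda>n. u n x) \<longlonglongrightarrow> (INF n. u n x)" by (rule LIMSEQ_INF[OF dec])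
    ultimately show ?case by (rule LIMSEQ_unique[symmetric, THEN trans]) simp
  qed
  have "(\<integral>\<^sup>+x. (INF n. u n x) \<partial>\<mu>) = (INF n. \<integral>\<^sup>+x. u n x \<partial>\<mu>)"
    by (rule nn_integral_monotone_convergence_INF_decseq[OF decf]) (auto intro: mu_meas fin)
  moreover have "(\<integral>\<^sup>+x. (INF n. u n x) \<partial>\<mu>) = 0"
    using ae by (subst nn_integral_cong_AE[where v="\<lambda>_. 0"]) auto
  moreover have "decseq (\<lambda>n. \<integral>\<^sup>+x. u n x \<partial>\<mu>)"
    by (intro decseq_SucI nn_integral_mono) (use dec in \<open>auto simp: decseq_Suc_iff\<close>)
  ultimately show ?thesis using LIMSEQ_INF[of "\<lambda>n. \<integral>\<^sup>+x. u n x \<partial>\<mu>"] by simp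
qed


lemma bounded: assumes g[measurable]: "g \<in> borel_measurable borel" and c: "\<And>y. g y \<le> c" and cfin: "c < top"
  shows "(\<integral>\<^sup>+x. g x \<partial>\<mu>) = (\<Sum>m. \<integral>\<^sup>+x. S_op P \<tau> ((Nop ^^ m) g) x \<partial>\<mu>)"
proof -
  define a where "a m = (\<integral>\<^sup>+x. S_op P \<tau> ((Nop ^^ m) g) x \<partial>\<mu>)" for m
  define r where "r n = (\<integral>\<^sup>+x. (Nop ^^ n) g x \<partial>\<mu>)" for n
  have r0: "r \<longlonglongrightarrow> 0"
  proof (rule tendsto_sandwich[of "\<lambda>_. 0" _ _ "\<lambda>n. c * \<integral>\<^sup>+x. u n x \<partial>\<mu>"])
    show "\<forall>\<^sub>F n in sequentially. r n \<le> c * \<integral>\<^sup>+x. u n x \<partial>\<mu>"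
    proof (intro always_eventually allI)
      fix n
      have "r n \<le> (\<integral>\<^sup>+x. c * u n x \<partial>\<mu>)"
        unfolding r_def u_def by (intro nn_integral_mono Nop_bound c) simp
      also have "\<dots> = c * \<integral>\<^sup>+x. u n x \<partial>\<mu>" by (rule nn_integral_cmult) (intro mu_meas u_meas)
      finally show "r n \<le> c * \<integral>\<^sup>+x. u n x \<partial>\<mu>" .
    qed
    show "(\<lambda>n. c * \<integral>\<^sup>+x. u n x \<partial>\<mu>) \<longlonglongrightarrow> 0"
      using ennreal_tendsto_cmult[OF cfin u_lim] by simp
  qed (auto simp: r_def)
  have "(\<lambda>n. (\<Sum>m<n. a m) + r n) \<longlonglongrightarrow> (\<Sum>m. a m) + 0"
    by (intro tendsto_add r0 summable_LIMSEQ) simp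
  moreover have "(\<lambda>n. (\<Sum>m<n. a m) + r n) = (\<lambda>n. \<integral>\<^sup>+x. g x \<partial>\<mu>)"
    unfolding a_def r_def by (intro ext dec[symmetric] g)
  ultimately have "(\<lambda>n. \<integral>\<^sup>+x. g x \<partial>\<mu>) \<longlonglongrightarrow> (\<Sum>m. a m)" by simp
  then show ?thesis unfolding a_def by (rule LIMSEQ_unique[OF tendsto_const])
qed


lemma general: assumes phi[measurable]: "\<phi> \<in> borel_measurable borel"
  shows "(\<integral>\<^sup>+x. \<phi> x \<partial>\<mu>) = (\<Sum>m. \<integral>\<^sup>+x. S_op P \<tau> ((Nop ^^ m) \<phi>) x \<partial>\<mu>)"
proof -
  define g where "g k x = min (\<phi> x) (of_nat k :: ennreal)" for k x
  have gm[measurable]: "g k \<in> borel_measurable borel" for k unfolding g_def by measurable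
  have inc: "g k y \<le> g (Suc k) y" for k y unfolding g_def
    by (intro min.mono order.refl) (simp del: of_nat_Suc)
  have sup: "(SUP k. g k y) = \<phi> y" for y
  proof -
    have "(SUP k. g k y) = min (\<phi> y) (SUP k. of_nat k)"
      unfolding g_def using inf_SUP[of "\<phi> y" "\<lambda>k. of_nat k :: ennreal" UNIV] by (simp add: inf_min)
    then show ?thesis by (simp add: ennreal_SUP_of_nat_eq_top)
  qed
  have sup': "(\<lambda>y. SUP k. g k y) = \<phi>" using sup by auto
  have bnd: "(\<integral>\<^sup>+x. g k x \<partial>\<mu>) = (\<Sum>m. \<integral>\<^sup>+x. S_op P \<tau> ((Nop ^^ m) (g k)) x \<partial>\<mu>)" for k
    by (rule bounded[of _ "of_nat k"]) (auto simp: g_def of_nat_less_top)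
  have "(\<integral>\<^sup>+x. \<phi> x \<partial>\<mu>) = (\<integral>\<^sup>+x. (SUP k. g k x) \<partial>\<mu>)" by (simp add: sup)
  also have "\<dots> = (SUP k. \<integral>\<^sup>+x. g k x \<partial>\<mu>)"
    by (rule nn_integral_monotone_convergence_SUP) (auto intro!: incseq_SucI le_funI inc mu_meas)
  also have "\<dots> = (SUP k. \<Sum>m. \<integral>\<^sup>+x. S_op P \<tau> ((Nop ^^ m) (g k)) x \<partial>\<mu>)" by (simp add: bnd)
  also have "\<dots> = (\<Sum>m. SUP k. \<integral>\<^sup>+x. S_op P \<tau> ((Nop ^^ m) (g k)) x \<partial>\<mu>)"
    by (rule ennreal_suminf_SUP_eq[symmetric]) (auto intro!: incseq_SucI nn_integral_mono S_mono Nop_iter_mono inc)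
  also have "\<dots> = (\<Sum>m. \<integral>\<^sup>+x. (SUP k. S_op P \<tau> ((Nop ^^ m) (g k)) x) \<partial>\<mu>)"
  proof (intro suminf_cong)
    fix m
    show "(SUP k. \<integral>\<^sup>+x. S_op P \<tau> ((Nop ^^ m) (g k)) x \<partial>\<mu>) = (\<integral>\<^sup>+x. (SUP k. S_op P \<tau> ((Nop ^^ m) (g k)) x) \<partial>\<mu>)"
      by (rule nn_integral_monotone_convergence_SUP[symmetric]) (auto intro!: incseq_SucI le_funI S_mono Nop_iter_mono inc mu_meas)
  qed
  also have "\<dots> = (\<Sum>m. \<integral>\<^sup>+x. S_op P \<tau> ((Nop ^^ m) \<phi>) x \<partial>\<mu>)"
  proof (intro suminf_cong nn_integral_cong)
    fix m x
    have "S_op P \<tau> ((Nop ^^ m) \<phi>) x = S_op P \<tau> (\<lambda>y. SUP k. (Nop ^^ m) (g k) y) x"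
    proof -
      have "(Nop ^^ m) \<phi> = (\<lambda>y. SUP k. (Nop ^^ m) (g k) y)"
        by (rule ext) (use Nop_iter_SUP[of g m, OF inc gm] sup' in simp)
      then show ?thesis by simp
    qed
    also have "\<dots> = (SUP k. S_op P \<tau> ((Nop ^^ m) (g k)) x)"
      by (rule S_SUP) (auto intro: Nop_iter_mono inc)
    finally show "(SUP k. S_op P \<tau> ((Nop ^^ m) (g k)) x) = S_op P \<tau> ((Nop ^^ m) \<phi>) x" by simp
  qed
  finally show ?thesis .
qed


lemma main: assumes f[measurable]: "f \<in> borel_measurable borel"
  shows "(\<integral>\<^sup>+x. f x \<partial>\<mu>) = (\<integral>\<^sup>+x. S_op P \<tau> (R_op P \<tau> f) x \<partial>\<mu>)"
proof -
  define G where "G \<omega> = f (shd \<omega>) * indicator {\<omega>. \<tau> \<omega> < \<infinity>} \<omega>" for \<omega>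
  have Gm[measurable]: "G \<in> borel_measurable path_space" unfolding G_def by measurable
  define \<phi> where "\<phi> z = (\<integral>\<^sup>+\<omega>. G \<omega> \<partial>P z)" for z
  have phim[measurable]: "\<phi> \<in> borel_measurable borel" unfolding \<phi>_def by (rule Pint_meas) measurable
  have R_eq: "R_op P \<tau> f y = (\<Sum>i. (Nop ^^ i) \<phi> y)" for y
  proof -
    have "R_op P \<tau> f y = (\<integral>\<^sup>+\<omega>. (\<Sum>i. f (\<omega> !! i) * indicator {\<omega>. enat i < \<tau> \<omega>} \<omega> * indicator {\<omega>. \<tau> \<omega> < \<infinity>} \<omega>) \<partial>P y)"
      unfolding R_op_def
    proof (intro nn_integral_cong)
      fix \<omega>
      show "(if \<tau> \<omega> < \<infinity> then \<Sum>i<the_enat (\<tau> \<omega>). f (\<omega> !! i) else 0) = (\<Sum>i. f (\<omega> !! i) * indicator {\<omega>. enat i < \<tau> \<omega>} \<omega> * indicator {\<omega>. \<tau> \<omega> < \<infinity>} \<omega>)"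
      proof (cases "\<tau> \<omega>")
        case (enat k)
        have "(\<Sum>i. f (\<omega> !! i) * indicator {\<omega>. enat i < \<tau> \<omega>} \<omega> * indicator {\<omega>. \<tau> \<omega> < \<infinity>} \<omega>)
            = (\<Sum>i<k. f (\<omega> !! i) * indicator {\<omega>. enat i < \<tau> \<omega>} \<omega> * indicator {\<omega>. \<tau> \<omega> < \<infinity>} \<omega>)"
          by (rule suminf_finite) (auto simp: enat indicator_def)
        also have "\<dots> = (\<Sum>i<k. f (\<omega> !! i))" by (intro sum.cong) (auto simp: enat indicator_def)
        finally show ?thesis using enat by simp
      qed (simp add: indicator_def)
    qed
    also have "\<dots> = (\<Sum>i. \<integral>\<^sup>+\<omega>. f (\<omega> !! i) * indicator {\<omega>. enat i < \<tau> \<omega>} \<omega> * indicator {\<omega>. \<tau> \<omega> < \<infinity>} \<omega> \<partial>P y)"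
      by (rule nn_integral_suminf) measurable
    also have "\<dots> = (\<Sum>i. \<integral>\<^sup>+\<omega>. indicator {\<omega>. enat i < \<tau> \<omega>} \<omega> * G (sdrop i \<omega>) \<partial>P y)"
    proof (intro suminf_cong nn_integral_cong_AE)
      fix i
      show "AE \<omega> in P y. f (\<omega> !! i) * indicator {\<omega>. enat i < \<tau> \<omega>} \<omega> * indicator {\<omega>. \<tau> \<omega> < \<infinity>} \<omega> = indicator {\<omega>. enat i < \<tau> \<omega>} \<omega> * G (sdrop i \<omega>)"
        using shift[where x=y and m=i]
      proof eventually_elim
        case (elim \<omega>)
        show ?case
        proof (cases "enat i < \<tau> \<omega>")
          case True
          then have "\<tau> (sdrop i \<omega>) = \<tau> \<omega> - enat i" using elim by blast
          then show ?thesis using True by (cases "\<tau> \<omega>") (auto simp: G_def indicator_def)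
        qed (simp add: indicator_def)
      qed
    qed
    also have "\<dots> = (\<Sum>i. (Nop ^^ i) \<phi> y)"
      unfolding \<phi>_def by (intro suminf_cong N_iter[symmetric] Gm)
    finally show ?thesis .
  qed
  have SR: "S_op P \<tau> (R_op P \<tau> f) x = (\<Sum>i. S_op P \<tau> ((Nop ^^ i) \<phi>) x)" for x
  proof -
    have "S_op P \<tau> (R_op P \<tau> f) x = (\<integral>\<^sup>+\<omega>. (\<Sum>i. (Nop ^^ i) \<phi> (\<omega> !! 1) * indicator {\<omega>. \<tau> \<omega> = 1} \<omega>) \<partial>P x)"
      unfolding S_op_def R_eq by simp
    also have "\<dots> = (\<Sum>i. S_op P \<tau> ((Nop ^^ i) \<phi>) x)"
      unfolding S_op_def by (rule nn_integral_suminf) measurable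
    finally show ?thesis .
  qed
  have phi_f: "AE x in \<mu>. \<phi> x = f x"
    using tau_fin
  proof eventually_elim
    case (elim z)
    interpret pz: prob_space "P z" by (rule P_prob)
    have A: "{\<omega>. \<tau> \<omega> = \<infinity>} \<in> sets path_space" using tau_set[of "\<lambda>t. t = \<infinity>"] by simp
    have "measure (P z) {\<omega>. \<tau> \<omega> = \<infinity>} \<le> 0"
    proof (rule LIMSEQ_le_const)
      show "(\<lambda>n. measure (P z) {\<omega>. enat n \<le> \<tau> \<omega>}) \<longlonglongrightarrow> 0" using elim by simp
      show "\<exists>N. \<forall>n\<ge>N. measure (P z) {\<omega>. \<tau> \<omega> = \<infinity>} \<le> measure (P z) {\<omega>. enat n \<le> \<tau> \<omega>}"
        by (intro exI allI impI pz.finite_measure_mono) auto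
    qed
    then have m0: "measure (P z) {\<omega>. \<tau> \<omega> = \<infinity>} = 0" using measure_nonneg[of "P z"] by (meson order.antisym)
    have "measure (P z) (space (P z) - {\<omega>. \<tau> \<omega> = \<infinity>}) = 1 - measure (P z) {\<omega>. \<tau> \<omega> = \<infinity>}"
      by (rule pz.prob_compl) (use A in simp)
    moreover have "space (P z) - {\<omega>. \<tau> \<omega> = \<infinity>} = {\<omega>. \<tau> \<omega> < \<infinity>}" by auto
    ultimately have m1: "emeasure (P z) {\<omega>. \<tau> \<omega> < \<infinity>} = 1" using m0 by (simp add: pz.emeasure_eq_measure)
    have "\<phi> z = (\<integral>\<^sup>+\<omega>. f z * indicator {\<omega>. \<tau> \<omega> < \<infinity>} \<omega> \<partial>P z)"
      unfolding \<phi>_def G_def using AE_shd[of z] by (intro nn_integral_cong_AE) auto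
    also have "\<dots> = f z * emeasure (P z) {\<omega>. \<tau> \<omega> < \<infinity>}"
      by (rule nn_integral_cmult_indicator) measurable
    finally show ?case using m1 by simp
  qed
  have "(\<integral>\<^sup>+x. S_op P \<tau> (R_op P \<tau> f) x \<partial>\<mu>) = (\<integral>\<^sup>+x. (\<Sum>i. S_op P \<tau> ((Nop ^^ i) \<phi>) x) \<partial>\<mu>)"
    by (simp add: SR)
  also have "\<dots> = (\<Sum>i. \<integral>\<^sup>+x. S_op P \<tau> ((Nop ^^ i) \<phi>) x \<partial>\<mu>)"
    by (rule nn_integral_suminf) (intro mu_meas, measurable)
  also have "\<dots> = (\<integral>\<^sup>+x. \<phi> x \<partial>\<mu>)" by (rule general[symmetric]) simp
  also have "\<dots> = (\<integral>\<^sup>+x. f x \<partial>\<mu>)" using phi_f by (rule nn_integral_cong_AE)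
  finally show ?thesis by simp
qed

end

theorem mainTheorem7:
  fixes K :: "'a::polish_space \<Rightarrow> 'a measure"
    and P :: "'a \<Rightarrow> 'a stream measure"
    and \<mu> :: "'a measure"
    and \<tau> :: "'a stream \<Rightarrow> enat"
    and f :: "'a \<Rightarrow> ennreal"
  assumes law: "markov_law K P"
    and mu_sets: "sets \<mu> = sets borel"
    and mu_finite: "finite_measure \<mu>"
    and mu_inv: "invariant_measure P \<mu>"
    and tau: "theta_compatible P \<tau>"
    and tau_fin: "AE x in \<mu>. (\<lambda>n. measure (P x) {\<omega> \<in> space path_space. \<tau> \<omega> \<ge> enat n}) \<longlonglongrightarrow> 0"
    and f_meas: "f \<in> borel_measurable borel"
  shows "(\<integral>\<^sup>+ x. f x \<partial>\<mu>) = (\<integral>\<^sup>+ x. S_op P \<tau> (R_op P \<tau> f) x \<partial>\<mu>)"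
proof -
  have "mcmu K P \<tau> \<mu>"
    by (intro mcmu.intro mc.intro mcmu_axioms.intro law tau mu_sets mu_finite mu_inv tau_fin)
  then show ?thesis by (rule mcmu.main[OF _ f_meas])
qed

end
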